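(* Let $G=\langle A\cup B\rangle$ be a CS group, let $g=({}^{a_0}b_0)\cdots({}^{a_{n-1}}b_{n-1})a_n\in G$ with $a_i\in A$, $b_i\in B$, and let $x\in X$ with $\ell:=\ell_g(x)<\infty$ such that $n=\mathrm{syl}(g\|_x)=\mathrm{syl}(g)$. Then for every $i\in\{0,\dots,n-1\}$ we have $a_i^{-1}a_na_i\in\mathfrak C(a_n,x)$, and there are integers $j(i)$ ($i=0,\dots,n-1$) such that $$g\|_x=\prod_{j=0}^{\ell-1}\ \prod_{i=0}^{n-1} b_i\big|_{0.(a_i^{-1}a_n^{\,j+j(i)}a_i)},$$ where the outer product is ordered by increasing $j$ and the inner one by increasing $i$.
   Context: Let $X$ be a nonempty set (possibly infinite) with distinguished letter $0$, $\dot X=X\setminus\{0\}$. $X^*$ is the free monoid on $X$ (concatenation $\star$) viewed as a rooted tree; $\mathrm{Aut}(X^* )$ acts on the right ($v\mapsto v.g$; $gh$ = first $g$ then $h$); ${}^hg=hgh^{-1}$; sections $g|_u$ are defined by $(u\star v).g=u.g\star v.(g|_u)$; elements of $\mathrm{Sym}(X)$ are identified with rooted automorphisms $(x\star v).\rho=x.\rho\star v$; $\mathrm{St}(1)$ is the first layer stabiliser. $\ell_g(v)$ is the length of the $\langle g\rangle$-orbit of $v$, and $g\|_v:=g^{\ell_g(v)}|_v$ when finite. A constant spinal (CS) group is $G=\langle A\cup B\rangle$ with $A\le\mathrm{Sym}(X)$ transitive and $B\le\mathrm{St}(1)$ such that $b|_0=b$ for all $b\in B$ and the elements $b|_x$ ($b\in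 B$, $x\in\dot X$) lie in $A$ and generate $A$. $\mathrm{syl}(g)$ is the least $n$ such that $g=({}^{a_0}b_0)\cdots({}^{a_{n-1}}b_{n-1})a_n$ with $a_i\in A$, $b_i\in B$. For $x\in X$ let $\mathrm{mp}_A(0,x)=\{c\in A:0.c=x\}$, and for $a\in A$ let $\mathfrak C(a,x)=\{cac^{-1}: c\in\mathrm{mp}_A(0,x)\}$. *)

theory Defs
  imports Main
begin

(* Letters: the type 'x (the set X = UNIV); words: lists (the free monoid X-star).
   Automorphisms act on the right: v.g is written g v.  The product gh means
   "first g, then h", i.e. the function h o g. *)

definition tmul :: "('a \<Rightarrow> 'a) \<Rightarrow> ('a \<Rightarrow> 'a) \<Rightarrow> ('a \<Rightarrow> 'a)" where
  "tmul g h = h \<circ> g"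

definition cj :: "('a \<Rightarrow> 'a) \<Rightarrow> ('a \<Rightarrow> 'a) \<Rightarrow> ('a \<Rightarrow> 'a)" where
  "cj h g = tmul (tmul h g) (inv h)"

fun prodL :: "('a \<Rightarrow> 'a) list \<Rightarrow> ('a \<Rightarrow> 'a)" where
  "prodL [] = id"
| "prodL (f # fs) = tmul f (prodL fs)"

definition zpow :: "('a \<Rightarrow> 'a) \<Rightarrow> int \<Rightarrow> ('a \<Rightarrow> 'a)" where
  "zpow f k = (if 0 \<le> k then f ^^ nat k else (inv f) ^^ nat (- k))"

inductive_set gen_grp :: "('a \<Rightarrow> 'a) set \<Rightarrow> ('a \<Rightarrow> 'a) set" for S where
  gen_id: "id \<in> gen_grp S"
| gen_base: "s \<in> S \<Longrightarrow> s \<in> gen_grp S"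
| gen_mul: "f \<in> gen_grp S \<Longrightarrow> g \<in> gen_grp S \<Longrightarrow> tmul f g \<in> gen_grp S"
| gen_inv: "f \<in> gen_grp S \<Longrightarrow> inv f \<in> gen_grp S"

definition is_subgroup :: "('a \<Rightarrow> 'a) set \<Rightarrow> bool" where
  "is_subgroup H \<longleftrightarrow> (\<forall>h\<in>H. bij h) \<and> id \<in> H \<and>
     (\<forall>f\<in>H. \<forall>g\<in>H. tmul f g \<in> H) \<and> (\<forall>f\<in>H. inv f \<in> H)"

definition is_aut :: "('x list \<Rightarrow> 'x list) \<Rightarrow> bool" where
  "is_aut f \<longleftrightarrow> bij f \<and> (\<forall>w. length (f w) = length w) \<and>
     (\<forall>u v. take (length u) (f (u @ v)) = f u)"

(* section g|_u, defined by (u v).g = u.g  v.(g|_u) *)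
definition sect :: "('x list \<Rightarrow> 'x list) \<Rightarrow> 'x list \<Rightarrow> ('x list \<Rightarrow> 'x list)" where
  "sect g u = (\<lambda>v. drop (length u) (g (u @ v)))"

definition rt :: "('x \<Rightarrow> 'x) \<Rightarrow> ('x list \<Rightarrow> 'x list)" where
  "rt \<rho> w = (case w of [] \<Rightarrow> [] | x # v \<Rightarrow> \<rho> x # v)"

definition in_St1 :: "('x list \<Rightarrow> 'x list) \<Rightarrow> bool" where
  "in_St1 g \<longleftrightarrow> is_aut g \<and> (\<forall>y. g [y] = [y])"

definition fin_orbit :: "('a \<Rightarrow> 'a) \<Rightarrow> 'a \<Rightarrow> bool" where
  "fin_orbit g v \<longleftrightarrow> (\<exists>k>0. (g ^^ k) v = v)"

definition orb_len :: "('a \<Rightarrow> 'a) \<Rightarrow> 'a \<Rightarrow> nat" where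
  "orb_len g v = (LEAST k. k > 0 \<and> (g ^^ k) v = v)"

definition sect_pow :: "('x list \<Rightarrow> 'x list) \<Rightarrow> 'x \<Rightarrow> ('x list \<Rightarrow> 'x list)" where
  "sect_pow g x = sect (g ^^ orb_len g [x]) [x]"

(* constant spinal group data; z is the distinguished letter 0 *)
definition CS_data :: "'x \<Rightarrow> ('x \<Rightarrow> 'x) set \<Rightarrow> ('x list \<Rightarrow> 'x list) set \<Rightarrow> bool" where
  "CS_data z A B \<longleftrightarrow>
     is_subgroup A \<and> (\<forall>x y. \<exists>a\<in>A. a x = y) \<and>
     is_subgroup B \<and> (\<forall>b\<in>B. in_St1 b) \<and>
     (\<forall>b\<in>B. sect b [z] = b) \<and>
     (\<forall>b\<in>B. \<forall>y. y \<noteq> z \<longrightarrow> (\<exists>a\<in>A. sect b [y] = rt a)) \<and>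
     gen_grp {a. \<exists>b\<in>B. \<exists>y. y \<noteq> z \<and> sect b [y] = rt a} = A"

definition CS_group :: "('x \<Rightarrow> 'x) set \<Rightarrow> ('x list \<Rightarrow> 'x list) set \<Rightarrow> ('x list \<Rightarrow> 'x list) set" where
  "CS_group A B = gen_grp (rt ` A \<union> B)"

definition syl_word :: "('x \<Rightarrow> 'x) list \<Rightarrow> ('x list \<Rightarrow> 'x list) list \<Rightarrow> ('x \<Rightarrow> 'x)
     \<Rightarrow> ('x list \<Rightarrow> 'x list)" where
  "syl_word as bs an = tmul (prodL (map2 (\<lambda>a b. cj (rt a) b) as bs)) (rt an)"

definition syl :: "('x \<Rightarrow> 'x) set \<Rightarrow> ('x list \<Rightarrow> 'x list) set \<Rightarrow> ('x list \<Rightarrow> 'x list) \<Rightarrow> nat" where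
  "syl A B g = (LEAST n. \<exists>as bs an. length as = n \<and> length bs = n \<and> set as \<subseteq> A \<and>
       set bs \<subseteq> B \<and> an \<in> A \<and> g = syl_word as bs an)"

definition mpA :: "('x \<Rightarrow> 'x) set \<Rightarrow> 'x \<Rightarrow> 'x \<Rightarrow> ('x \<Rightarrow> 'x) set" where
  "mpA A z x = {c \<in> A. c z = x}"

definition Cfrak :: "('x \<Rightarrow> 'x) set \<Rightarrow> 'x \<Rightarrow> ('x \<Rightarrow> 'x) \<Rightarrow> 'x \<Rightarrow> ('x \<Rightarrow> 'x) set" where
  "Cfrak A z a x = {tmul (tmul c a) (inv c) | c. c \<in> mpA A z x}"

end

theory Submission imports Defs begin

lemma rt_cons[simp]: "rt f (y # v) = f y # v" by (simp add: rt_def)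
lemma rt_comp: "rt (f \<circ> g) = rt f \<circ> rt g"
proof (rule ext)
  fix w show "rt (f \<circ> g) w = (rt f \<circ> rt g) w" by (cases w) (simp_all add: rt_def)
qed
lemma rt_id[simp]: "rt id = id"
proof (rule ext)
  fix w show "rt id w = id w" by (cases w) (simp_all add: rt_def)
qed

lemma inv_rt: "bij f \<Longrightarrow> inv (rt f) = rt (inv f)"
proof (rule inv_unique_comp)
  assume b: "bij f"
  have "f \<circ> inv f = id" using b by (simp add: bij_is_surj surj_iff[THEN iffD1])
  then show "rt f \<circ> rt (inv f) = id" by (simp only: rt_comp[symmetric] rt_id)
  have "inv f \<circ> f = id" using b by (simp add: bij_is_inj)
  then show "rt (inv f) \<circ> rt f = id" by (simp only: rt_comp[symmetric] rt_id)
qed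

lemma St1_cons: assumes "in_St1 b" shows "b (y # v) = y # sect b [y] v"
proof -
  have a: "is_aut b" and e: "b [y] = [y]" using assms unfolding in_St1_def by auto
  have t0: "take (length [y]) (b ([y]@v)) = b [y]" using a unfolding is_aut_def by blast
  have t: "take 1 (b ([y]@v)) = [y]" using t0 e by simp
  have s: "sect b [y] v = drop 1 (b ([y]@v))" unfolding sect_def by simp
  have "b ([y] @ v) = take 1 (b ([y]@v)) @ drop 1 (b ([y]@v))" by (rule append_take_drop_id[symmetric])
  also have "\<dots> = [y] @ sect b [y] v" unfolding t s ..
  finally show ?thesis by simp
qed

lemma St1_len: "in_St1 b \<Longrightarrow> length (sect b [y] v) = length v"
  unfolding in_St1_def is_aut_def sect_def by simp

lemma cj_cons: "bij a \<Longrightarrow> in_St1 b \<Longrightarrow> cj (rt a) b (y # v) = y # sect b [a y] v"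
  by (simp add: cj_def tmul_def inv_rt St1_cons bij_is_inj)

lemma prodL_cj: "\<forall>i\<in>set is. bij (a i) \<and> in_St1 (b i) \<Longrightarrow>
  prodL (map (\<lambda>i. cj (rt (a i)) (b i)) is) (y # v) = y # prodL (map (\<lambda>i. sect (b i) [a i y]) is) v"
  by (induction "is" arbitrary: v) (auto simp: tmul_def cj_cons)

lemma prodL_append: "prodL (xs @ ys) = tmul (prodL xs) (prodL ys)"
  by (induction xs) (auto simp: tmul_def)

lemma prodL_concat: "prodL (concat L) = prodL (map prodL L)"
  by (induction L) (auto simp: prodL_append tmul_def)

lemma prodL_len: "\<forall>f\<in>set fs. \<forall>v. length (f v) = length v \<Longrightarrow> length (prodL fs v) = length v"
  by (induction fs arbitrary: v) (auto simp: tmul_def)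

lemma map2_map: "map2 f (map a xs) (map b xs) = map (\<lambda>i. f (a i) (b i)) xs"
  by (induction xs) auto

lemma sum_list_concat': "sum_list (concat xss) = sum_list (map sum_list xss)"
  by (induction xss) auto

lemma P_shift:
  assumes "bij a0" "\<forall>a'\<in>set as. bij a'" "length as = length bs"
  shows "prodL (map2 (\<lambda>a b. cj (rt a) b) as bs) \<circ> rt a0
       = rt a0 \<circ> prodL (map2 (\<lambda>a b. cj (rt a) b) (map (\<lambda>a'. a' \<circ> a0) as) bs)"
  using assms(3,2)
proof (induction as bs rule: list_induct2)
  case Nil then show ?case by simp
next
  case (Cons a' as b' bs)
  have ba: "bij a'" using Cons by simp
  have e0: "a0 \<circ> (inv a0 \<circ> inv a') = inv a'" using assms(1)
    by (metis bij_is_surj surj_iff comp_assoc id_comp)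
  have e: "rt a0 \<circ> rt (inv (a' \<circ> a0)) = rt (inv a')"
    using assms(1) ba e0 by (simp add: rt_comp[symmetric] o_inv_distrib)
  have "cj (rt a') b' \<circ> rt a0 = rt a0 \<circ> cj (rt (a' \<circ> a0)) b'"
  proof -
    have "cj (rt a') b' \<circ> rt a0 = rt (inv a') \<circ> b' \<circ> rt (a' \<circ> a0)"
      using ba by (simp add: cj_def tmul_def inv_rt rt_comp o_assoc)
    also have "\<dots> = rt a0 \<circ> rt (inv (a' \<circ> a0)) \<circ> b' \<circ> rt (a' \<circ> a0)" using e by simp
    also have "\<dots> = rt a0 \<circ> cj (rt (a' \<circ> a0)) b'"
      using ba assms(1) by (simp add: cj_def tmul_def inv_rt bij_comp o_assoc)
    finally show ?thesis .
  qed
  note cjs = this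
  have IH: "prodL (map2 (\<lambda>a b. cj (rt a) b) as bs) \<circ> rt a0
       = rt a0 \<circ> prodL (map2 (\<lambda>a b. cj (rt a) b) (map (\<lambda>a'. a' \<circ> a0) as) bs)"
    by (rule Cons.IH) (use Cons.prems in simp)
  have "prodL (map2 (\<lambda>a b. cj (rt a) b) (a' # as) (b' # bs)) \<circ> rt a0
      = prodL (map2 (\<lambda>a b. cj (rt a) b) as bs) \<circ> (cj (rt a') b' \<circ> rt a0)"
    by (simp add: tmul_def comp_assoc)
  also have "\<dots> = (prodL (map2 (\<lambda>a b. cj (rt a) b) as bs) \<circ> rt a0) \<circ> cj (rt (a' \<circ> a0)) b'"
    unfolding cjs by (simp add: comp_assoc)
  also have "\<dots> = rt a0 \<circ> (prodL (map2 (\<lambda>a b. cj (rt a) b) (map (\<lambda>a'. a' \<circ> a0) as) bs) \<circ> cj (rt (a' \<circ> a0)) b')"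
    unfolding IH by (simp add: comp_assoc)
  also have "\<dots> = rt a0 \<circ> prodL (map2 (\<lambda>a b. cj (rt a) b) (map (\<lambda>a'. a' \<circ> a0) (a' # as)) (b' # bs))"
    by (simp add: tmul_def)
  finally show ?case .
qed

lemma rep:
  assumes sg: "is_subgroup A" and fs: "\<forall>f\<in>set fs. f \<in> B \<or> f \<in> rt ` A"
  shows "\<exists>as bs c. length as = sum_list (map (\<lambda>f. if f \<in> rt ` A then 0 else 1) fs) \<and>
     length bs = length as \<and> set as \<subseteq> A \<and> set bs \<subseteq> B \<and> c \<in> A \<and> prodL fs = syl_word as bs c"
  using fs
proof (induction fs)
  case Nil
  have "prodL [] = syl_word [] [] id" by (simp add: syl_word_def tmul_def)
  moreover have "id \<in> A" using sg by (simp add: is_subgroup_def)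
  ultimately show ?case
    apply (rule_tac exI[of _ "[]"])
    apply (rule_tac exI[of _ "[]"])
    apply (rule_tac exI[of _ id])
    apply (intro conjI)
         apply simp
        apply simp
       apply simp
      apply simp
     apply assumption
    apply assumption
    done
next
  case (Cons f fs)
  have pr: "\<forall>f\<in>set fs. f \<in> B \<or> f \<in> rt ` A" using Cons.prems by simp
  from Cons.IH[OF pr] obtain as bs c where h: "length as = sum_list (map (\<lambda>f. if f \<in> rt ` A then 0 else 1) fs)"
     "length bs = length as" "set as \<subseteq> A" "set bs \<subseteq> B" "c \<in> A" "prodL fs = syl_word as bs c" by blast
  have bA: "\<forall>h\<in>A. bij h" and idA: "id \<in> A" and mA: "\<forall>f\<in>A. \<forall>g\<in>A. tmul f g \<in> A"
    using sg by (auto simp: is_subgroup_def)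
  show ?case
  proof (cases "f \<in> rt ` A")
    case True
    then obtain a0 where a0: "a0 \<in> A" "f = rt a0" by auto
    have "prodL (f # fs) = syl_word (map (\<lambda>a'. a' \<circ> a0) as) bs (c \<circ> a0)"
    proof -
      have ps: "prodL (map2 (\<lambda>a b. cj (rt a) b) as bs) \<circ> rt a0
       = rt a0 \<circ> prodL (map2 (\<lambda>a b. cj (rt a) b) (map (\<lambda>a'. a' \<circ> a0) as) bs)"
      proof (rule P_shift)
        show "bij a0" using a0 bA by blast
        show "\<forall>a'\<in>set as. bij a'" using h(3) bA by blast
        show "length as = length bs" using h(2) by simp
      qed
      have "prodL (f # fs) = (rt c \<circ> prodL (map2 (\<lambda>a b. cj (rt a) b) as bs)) \<circ> rt a0"
        using h(6) a0(2) by (simp add: syl_word_def tmul_def)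
      also have "\<dots> = rt c \<circ> (prodL (map2 (\<lambda>a b. cj (rt a) b) as bs) \<circ> rt a0)"
        by (rule comp_assoc)
      also have "\<dots> = (rt c \<circ> rt a0) \<circ> prodL (map2 (\<lambda>a b. cj (rt a) b) (map (\<lambda>a'. a' \<circ> a0) as) bs)"
        unfolding ps by (rule comp_assoc[symmetric])
      also have "\<dots> = syl_word (map (\<lambda>a'. a' \<circ> a0) as) bs (c \<circ> a0)"
        unfolding syl_word_def tmul_def rt_comp ..
      finally show ?thesis .
    qed
    moreover have "set (map (\<lambda>a'. a' \<circ> a0) as) \<subseteq> A" "c \<circ> a0 \<in> A"
      using mA a0 h by (auto simp: tmul_def)
    moreover have "length (map (\<lambda>a'. a' \<circ> a0) as) = sum_list (map (\<lambda>f. if f \<in> rt ` A then 0 else 1) (f # fs))"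
      using True h(1) by simp
    moreover have "length bs = length (map (\<lambda>a'. a' \<circ> a0) as)" using h(2) by simp
    ultimately show ?thesis using h(4) by blast
  next
    case False
    then have fB: "f \<in> B" using Cons by auto
    have "prodL (f # fs) = prodL fs \<circ> f" by (simp add: tmul_def)
    also have "\<dots> = syl_word (id # as) (f # bs) c"
      unfolding h(6) by (simp add: syl_word_def tmul_def cj_def comp_assoc)
    finally have e: "prodL (f # fs) = syl_word (id # as) (f # bs) c" .
    have l: "length (id # as) = sum_list (map (\<lambda>f. if f \<in> rt ` A then 0 else 1) (f # fs))"
      using False h(1) by simp
    have l2: "length (f # bs) = length (id # as)" using h(2) by simp
    have s1: "set (id # as) \<subseteq> A" using h(3) idA by simp
    have s2: "set (f # bs) \<subseteq> B" using h(4) fB by simp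
    show ?thesis using e l l2 s1 s2 h(5) by blast
  qed
qed


lemma sum_ind: "finite S \<Longrightarrow> (\<Sum>j\<in>S. if Q j then 1 else 0::nat) = card {j\<in>S. Q j}"
  by (simp add: sum.inter_filter[symmetric])

lemma orbit_dist: "inj f \<Longrightarrow> p < q \<Longrightarrow> (f^^p) x = (f^^q) x \<Longrightarrow> (f^^(q-p)) x = x"
proof -
  assume i: "inj f" and pq: "p < q" and e: "(f^^p) x = (f^^q) x"
  have "f^^q = f^^p \<circ> f^^(q-p)" using pq by (simp add: funpow_add[symmetric])
  then have "(f^^q) x = (f^^p) ((f^^(q-p)) x)" by simp
  with e have "(f^^p) x = (f^^p) ((f^^(q-p)) x)" by simp
  then show ?thesis using inj_fn[OF i, of p] by (metis injD)
qed

lemma pow_in: assumes "is_subgroup A" "f \<in> A" shows "f^^k \<in> A"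
proof (induction k)
  case 0
  have "id \<in> A" using assms by (simp add: is_subgroup_def)
  then show ?case by (simp only: funpow.simps(1))
next
  case (Suc k)
  have "tmul (f^^k) f \<in> A" using assms Suc by (simp add: is_subgroup_def)
  then show ?case by (simp only: tmul_def funpow.simps(2))
qed

theorem mainTheorem7:
  fixes z :: 'x
    and A :: "('x \<Rightarrow> 'x) set"
    and B :: "('x list \<Rightarrow> 'x list) set"
    and a :: "nat \<Rightarrow> ('x \<Rightarrow> 'x)"
    and b :: "nat \<Rightarrow> ('x list \<Rightarrow> 'x list)"
    and n :: nat and x :: 'x
    and g :: "'x list \<Rightarrow> 'x list"
  assumes CS: "CS_data z A B"
    and a_in: "\<forall>i\<le>n. a i \<in> A"
    and b_in: "\<forall>i<n. b i \<in> B"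
    and g_def: "g = syl_word (map a [0..<n]) (map b [0..<n]) (a n)"
    and fin: "fin_orbit g [x]"
    and syl1: "n = syl A B (sect_pow g x)"
    and syl2: "n = syl A B g"
  shows "(\<forall>i<n. tmul (tmul (inv (a i)) (a n)) (a i) \<in> Cfrak A z (a n) x) \<and>
         (\<exists>jf :: nat \<Rightarrow> int.
            sect_pow g x =
              prodL (concat (map (\<lambda>j. map (\<lambda>i.
                  sect (b i) [(tmul (tmul (inv (a i)) (zpow (a n) (int j + jf i))) (a i)) z])
                [0..<n]) [0..<orb_len g [x]])))"

proof -
  have sgA: "is_subgroup A" and St1: "\<forall>b\<in>B. in_St1 b" and s0: "\<forall>b\<in>B. sect b [z] = b"
    and sA: "\<forall>b\<in>B. \<forall>y. y \<noteq> z \<longrightarrow> (\<exists>a\<in>A. sect b [y] = rt a)"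
    using CS unfolding CS_data_def by auto
  have bA: "\<forall>h\<in>A. bij h" using sgA by (simp add: is_subgroup_def)
  define an where "an = a n"
  have anA: "an \<in> A" using a_in an_def by simp
  have ban: "bij an" using anA bA by simp
  define S where "S y = prodL (map (\<lambda>i. sect (b i) [a i y]) [0..<n])" for y
  define Sk where "Sk k y = prodL (map (\<lambda>j. S ((an^^j) y)) [0..<k])" for k y
  have ab: "\<forall>i\<in>set [0..<n]. bij (a i) \<and> in_St1 (b i)" using a_in b_in bA St1 by auto
  have g_cons: "g (y # v) = an y # S y v" for y v
    unfolding g_def syl_word_def map2_map using prodL_cj[OF ab, of y v]
    by (simp add: tmul_def S_def an_def)
  have S_len: "length (S y v) = length v" for y v
    unfolding S_def by (rule prodL_len) (use b_in St1 in \<open>auto intro!: St1_len\<close>)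
  have Sk_len: "length (Sk k y v) = length v" for k y v
    unfolding Sk_def by (rule prodL_len) (use S_len in auto)
  have gpow: "(g^^k) (y # v) = (an^^k) y # Sk k y v" for k y v
    by (induction k) (simp_all add: Sk_def g_cons prodL_append tmul_def)
  have gpow1: "(g^^k) [x] = [(an^^k) x]" for k
    using gpow[of k x "[]"] Sk_len[of k x "[]"] by simp
  define l where "l = orb_len g [x]"
  have l_eq: "l = (LEAST k. 0 < k \<and> (an^^k) x = x)" unfolding l_def orb_len_def gpow1 by simp
  have ex: "\<exists>k. 0 < k \<and> (an^^k) x = x" using fin gpow1 unfolding fin_orbit_def by auto
  have l1: "0 < l" "(an^^l) x = x" using LeastI_ex[OF ex] l_eq by auto
  have l2: "0 < k \<Longrightarrow> k < l \<Longrightarrow> (an^^k) x \<noteq> x" for k using not_less_Least l_eq by blast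
  have dist: "p < l \<Longrightarrow> q < l \<Longrightarrow> (an^^p) x = (an^^q) x \<Longrightarrow> p = q" for p q
  proof (rule ccontr)
    assume pl: "p < l" "q < l" and e: "(an^^p) x = (an^^q) x" and ne: "p \<noteq> q"
    show False
    proof (cases "p < q")
      case True
      then show False using orbit_dist[OF bij_is_inj[OF ban] True e] l2[of "q-p"] pl by auto
    next
      case False
      then have "q < p" using ne by simp
      then show False using orbit_dist[OF bij_is_inj[OF ban] _ e[symmetric]] l2[of "p-q"] pl by auto
    qed
  qed
  have sp: "sect_pow g x = Sk l x"
    unfolding sect_pow_def sect_def l_def[symmetric] fun_eq_iff using gpow by simp
  define F where "F j i = sect (b i) [a i ((an^^j) x)]" for j i
  define fs where "fs = concat (map (\<lambda>j. map (\<lambda>i. F j i) [0..<n]) [0..<l])"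
  have sp2: "sect_pow g x = prodL fs"
    unfolding sp fs_def prodL_concat Sk_def S_def F_def by (simp add: comp_def)
  have key: "\<forall>i<n. \<exists>k<l. a i ((an^^k) x) = z"
  proof (rule ccontr)
    assume "\<not> ?thesis"
    then obtain i0 where i0: "i0 < n" "\<forall>k<l. a i0 ((an^^k) x) \<noteq> z" by auto
    have Fcase: "F j i \<in> B \<and> a i ((an^^j) x) = z \<or> F j i \<in> rt ` A" if "i < n" for i j
    proof (cases "a i ((an^^j) x) = z")
      case True then show ?thesis using s0 b_in that by (simp add: F_def)
    next
      case False then show ?thesis using sA b_in that unfolding F_def by blast
    qed
    have fsB: "\<forall>f\<in>set fs. f \<in> B \<or> f \<in> rt ` A"
    proof
      fix f assume "f \<in> set fs"
      then obtain j i where "i < n" "f = F j i" by (auto simp: fs_def)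
      then show "f \<in> B \<or> f \<in> rt ` A" using Fcase by blast
    qed
    define w where "w f = (if f \<in> rt ` A then 0 else 1::nat)" for f
    define P where "P i j = (a i ((an^^j) x) = z)" for i j
    have wF: "w (F j i) \<le> (if P i j then 1 else 0)" if "i < n" for i j
      using Fcase[OF that, of j] unfolding w_def P_def by auto
    have "sum_list (map w fs) = (\<Sum>j\<in>{0..<l}. \<Sum>i\<in>{0..<n}. w (F j i))"
      unfolding fs_def sum_list_concat' map_concat
      by (simp add: interv_sum_list_conv_sum_set_nat comp_def)
    also have "\<dots> \<le> (\<Sum>j\<in>{0..<l}. \<Sum>i\<in>{0..<n}. if P i j then 1 else 0)"
      by (intro sum_mono) (use wF in auto)
    also have "\<dots> = (\<Sum>i\<in>{0..<n}. \<Sum>j\<in>{0..<l}. if P i j then 1 else 0)" by (rule sum.swap)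
    also have "\<dots> = (\<Sum>i\<in>{0..<n}. card {j\<in>{0..<l}. P i j})" by (simp add: sum_ind)
    also have "\<dots> \<le> (\<Sum>i\<in>{0..<n}. if i = i0 then 0 else 1)"
    proof (intro sum_mono)
      fix i assume i: "i \<in> {0..<n}"
      show "card {j\<in>{0..<l}. P i j} \<le> (if i = i0 then 0 else 1)"
      proof (cases "i = i0")
        case True then show ?thesis using i0 by (simp add: P_def)
      next
        case False
        have ia: "inj (a i)" using ab i by (simp add: bij_is_inj)
        have "card {j\<in>{0..<l}. P i j} \<le> Suc 0"
          apply (subst card_le_Suc0_iff_eq)
           apply simp
          apply (auto simp: P_def)
          by (metis dist injD[OF ia])
        then show ?thesis using False by simp
      qed
    qed
    also have "\<dots> = (\<Sum>i\<in>{0..<n}. if i \<noteq> i0 then 1 else 0)" by (rule sum.cong) auto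
    also have "\<dots> = card {i\<in>{0..<n}. i \<noteq> i0}" by (rule sum_ind) simp
    also have "\<dots> = card ({0..<n} - {i0})" by (rule arg_cong[where f=card]) auto
    also have "\<dots> = n - 1" using i0 by (simp add: card_Diff_singleton)
    finally have cnt: "sum_list (map w fs) \<le> n - 1" .
    obtain as bs c where r: "length as = sum_list (map w fs)" "length bs = length as"
      "set as \<subseteq> A" "set bs \<subseteq> B" "c \<in> A" "prodL fs = syl_word as bs c"
      using rep[OF sgA fsB] unfolding w_def by blast
    have "syl A B (sect_pow g x) \<le> sum_list (map w fs)"
      unfolding syl_def by (rule Least_le) (use r sp2 in metis)
    with syl1 cnt i0 show False by linarith
  qed
  have "\<forall>i. \<exists>k. i < n \<longrightarrow> k < l \<and> a i ((an^^k) x) = z" using key by metis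
  then obtain kf where kf: "\<And>i. i < n \<Longrightarrow> kf i < l \<and> a i ((an^^kf i) x) = z" by metis
  define m where "m i = l - kf i" for i
  have xm: "(an^^(m i)) (inv (a i) z) = x" if "i < n" for i
  proof -
    have ia: "inj (a i)" using ab that by (simp add: bij_is_inj)
    have "inv (a i) z = (an^^kf i) x" using kf[OF that] inv_f_eq[OF ia] by metis
    moreover have "(an^^(m i)) ((an^^kf i) x) = (an^^l) x"
      using kf[OF that] unfolding m_def by (metis comp_apply funpow_add le_add_diff_inverse2 less_imp_le)
    ultimately show ?thesis using l1 by simp
  qed
  have conj1: "tmul (tmul (inv (a i)) (a n)) (a i) \<in> Cfrak A z (a n) x" if i: "i < n" for i
  proof -
    define c where "c = (an^^(m i)) \<circ> inv (a i)"
    have aiA: "a i \<in> A" using a_in i by simp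
    have "inv (a i) \<in> A" using sgA aiA by (simp add: is_subgroup_def)
    then have cA: "c \<in> A" using sgA pow_in[OF sgA anA, of "m i"]
      unfolding c_def is_subgroup_def tmul_def by blast
    have cz: "c z = x" using xm[OF i] by (simp add: c_def)
    have ic: "inj c" using cA bA bij_is_inj by blast
    have bai: "bij (a i)" using aiA bA by simp
    have "tmul (tmul c (a n)) (inv c) = tmul (tmul (inv (a i)) (a n)) (a i)"
    proof (rule ext)
      fix y
      define u where "u = inv (a i) y"
      have "c (a i (an u)) = (an^^m i) (an u)" using bij_is_inj[OF bai] by (simp add: c_def)
      also have "\<dots> = an ((an^^m i) u)" by (simp add: funpow_swap1)
      finally have "inv c (an ((an^^m i) u)) = a i (an u)" using ic by (metis inv_f_eq)
      then show "tmul (tmul c (a n)) (inv c) y = tmul (tmul (inv (a i)) (a n)) (a i) y"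
        by (simp add: tmul_def c_def u_def an_def)
    qed
    then show ?thesis using cA cz unfolding Cfrak_def mpA_def by (metis (mono_tags, lifting) mem_Collect_eq)
  qed
  have eqF: "sect (b i) [(tmul (tmul (inv (a i)) (zpow (a n) (int j + int (m i)))) (a i)) z] = F j i"
    if i: "i < n" for i j
  proof -
    have "zpow (a n) (int j + int (m i)) = an^^(j + m i)" by (simp add: zpow_def an_def nat_add_distrib)
    then show ?thesis using xm[OF i] by (simp add: tmul_def F_def funpow_add)
  qed
  have conj2: "sect_pow g x = prodL (concat (map (\<lambda>j. map (\<lambda>i.
                  sect (b i) [(tmul (tmul (inv (a i)) (zpow (a n) (int j + int (m i)))) (a i)) z])
                [0..<n]) [0..<orb_len g [x]]))"
  proof -
    have eqm: "map (\<lambda>j. map (\<lambda>i. sect (b i) [(tmul (tmul (inv (a i)) (zpow (a n) (int j + int (m i)))) (a i)) z])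
                [0..<n]) [0..<l] = map (\<lambda>j. map (\<lambda>i. F j i) [0..<n]) [0..<l]"
      by (rule map_cong[OF refl], rule map_cong[OF refl]) (simp add: eqF)
    show ?thesis unfolding sp2 fs_def l_def[symmetric] eqm by (rule refl)
  qed
  show ?thesis
  proof (intro conjI)
    show "\<forall>i<n. tmul (tmul (inv (a i)) (a n)) (a i) \<in> Cfrak A z (a n) x" using conj1 by blast
    show "\<exists>jf :: nat \<Rightarrow> int.
            sect_pow g x =
              prodL (concat (map (\<lambda>j. map (\<lambda>i.
                  sect (b i) [(tmul (tmul (inv (a i)) (zpow (a n) (int j + jf i))) (a i)) z])
                [0..<n]) [0..<orb_len g [x]]))"
    proof -
      define jf0 where "jf0 = (\<lambda>i. int (m i))"
      have c2: "sect_pow g x =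
              prodL (concat (map (\<lambda>j. map (\<lambda>i.
                  sect (b i) [(tmul (tmul (inv (a i)) (zpow (a n) (int j + jf0 i))) (a i)) z])
                [0..<n]) [0..<orb_len g [x]]))"
        unfolding jf0_def by (rule conj2)
      show ?thesis by (rule exI[of _ jf0]) (rule c2)
    qed
  qed
qed

end
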